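(* Let $\phi:(\mathcal S,E)\to(\mathcal S',E')$ be an isomorphism of information structures, let $Q$ and $Q'$ be adapted probability functors on $\mathcal S$ and $\mathcal S'$, and suppose $Q'_{\phi(X)}=m_X(Q_X)$ for every $X\in\mathrm{Ob}\,\mathcal S$. Then for every $\alpha>0$ the induced map $\phi^*:H^\bullet(\mathcal S',F_\alpha(Q'))\to H^\bullet(\mathcal S,F_\alpha(Q))$, given on cochains by $(\phi^*f)_Y[X_1|\dots|X_n](P)=f_{\phi(Y)}[\phi(X_1)|\dots|\phi(X_n)](m_Y(P))$, is an isomorphism.
   Context: An information structure is a pair $(\mathcal S,E)$ with $\mathcal S$ a small poset category with terminal object $\mathbf 1$ and finite-dimensional nerve, in which $XY:=X\wedge Y$ exists whenever $X,Y$ have a common refinement, and $E:\mathcal S\to\mathcal{Sets}$ a functor with $E(\mathbf 1)$ a singleton, $E(\pi)$ a strict surjection for non-identity $\pi$, $|E(\pi)^{-1}(x)\cap E(\sigma)^{-1}(y)|\le1$ for product diagrams $X\xleftarrow{\pi}X\wedge Y\xrightarrow{\sigma}Y$, and every $x\in E(X)$ the $X$-component of some element of $\lim E$. A morphism $\phi=(\phi_0,\phi^\#)$ is a functor $\phi_0$ (written $\phi$) preserving $\mathbf 1$ and existing products, with a natural transformation $\phi^\#:E\Rightarrow E'\circ\phi_0$ with surjective components; composition is componentwise, and an isomorphism is a morphism with a two-sided inverse. $\mathcal S_X=\{Y:X\to Y\}$. A probability functor $Q$ gives simplicial subcomplexes $Q_X$ of the simplex $\Delta(X)$ of laws on $E(X)$,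 with marginalization $\pi_*P(y)=\sum_{x\in E(\pi)^{-1}(y)}P(x)$; $Q$ adapted means stable under conditioning $P|_{Y=y}$ ($P|_{Y=y}(x)=P(x)/\pi_*P(y)$ if $E(\pi)(x)=y$, else $0$). $m_X(P)(x')=\sum_{x\in(\phi^\#_X)^{-1}(x')}P(x)$. $F_\alpha(Q_X)$: measurable functions on $Q_X$ with action $(Y.f)(P)=\sum_yP(Y=y)^\alpha f(P|_{Y=y})$. Cochains: families $f_X[X_1|\dots|X_n]$ of measurable functions on $Q_X$, $X_i\in\mathcal S_X$, jointly local ($f_X[\dots](P)=f_Y[\dots](\pi_*P)$ for $\pi:X\to Y$, $X_i\in\mathcal S_Y$), with coboundary $(\delta f)[X_1|\dots|X_{n+1}]=X_1.f[X_2|\dots|X_{n+1}]+\sum_{k=1}^n(-1)^kf[X_1|\dots|X_kX_{k+1}|\dots|X_{n+1}]+(-1)^{n+1}f[X_1|\dots|X_n]$; $H^\bullet(\mathcal S,F_\alpha(Q))$ is its cohomology (equal to $\mathrm{Ext}^\bullet(\mathbb R_{\mathcal S},F_\alpha(Q))$). *)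

theory Defs
  imports "HOL-Analysis.Analysis"
begin

(* A poset category S is given by a set of objects S and a relation le,
   where "le X Y" means there is a (unique) arrow X -> Y (Y coarser than X). *)

definition is_pmeet :: "'a set \<Rightarrow> ('a \<Rightarrow> 'a \<Rightarrow> bool) \<Rightarrow> 'a \<Rightarrow> 'a \<Rightarrow> 'a \<Rightarrow> bool" where
  "is_pmeet S le X Y W \<longleftrightarrow> W \<in> S \<and> le W X \<and> le W Y \<and> (\<forall>V\<in>S. le V X \<and> le V Y \<longrightarrow> le V W)"

definition pmeet :: "'a set \<Rightarrow> ('a \<Rightarrow> 'a \<Rightarrow> bool) \<Rightarrow> 'a \<Rightarrow> 'a \<Rightarrow> 'a" where
  "pmeet S le X Y = (THE W. is_pmeet S le X Y W)"

definition common_refinement :: "'a set \<Rightarrow> ('a \<Rightarrow> 'a \<Rightarrow> bool) \<Rightarrow> 'a \<Rightarrow> 'a \<Rightarrow> bool" where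
  "common_refinement S le X Y \<longleftrightarrow> (\<exists>Z\<in>S. le Z X \<and> le Z Y)"

definition coarser :: "'a set \<Rightarrow> ('a \<Rightarrow> 'a \<Rightarrow> bool) \<Rightarrow> 'a \<Rightarrow> 'a set" where
  "coarser S le X = {Y \<in> S. le X Y}"

definition lim_E :: "'a set \<Rightarrow> ('a \<Rightarrow> 'a \<Rightarrow> bool) \<Rightarrow> ('a \<Rightarrow> 'b set) \<Rightarrow> ('a \<Rightarrow> 'a \<Rightarrow> 'b \<Rightarrow> 'b)
    \<Rightarrow> ('a \<Rightarrow> 'b) set" where
  "lim_E S le E Emap = {s. (\<forall>Y\<in>S. s Y \<in> E Y) \<and> (\<forall>Y\<in>S. \<forall>Z\<in>S. le Y Z \<longrightarrow> Emap Y Z (s Y) = s Z)}"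

definition info_structure ::
  "'a set \<Rightarrow> ('a \<Rightarrow> 'a \<Rightarrow> bool) \<Rightarrow> 'a \<Rightarrow> ('a \<Rightarrow> 'b set) \<Rightarrow> ('a \<Rightarrow> 'a \<Rightarrow> 'b \<Rightarrow> 'b) \<Rightarrow> bool" where
  "info_structure S le one E Emap \<longleftrightarrow>
     \<comment> \<open>poset category\<close>
     (\<forall>X\<in>S. le X X) \<and>
     (\<forall>X\<in>S. \<forall>Y\<in>S. le X Y \<and> le Y X \<longrightarrow> X = Y) \<and>
     (\<forall>X\<in>S. \<forall>Y\<in>S. \<forall>Z\<in>S. le X Y \<and> le Y Z \<longrightarrow> le X Z) \<and>
     \<comment> \<open>terminal object\<close>
     one \<in> S \<and> (\<forall>X\<in>S. le X one) \<and>
     \<comment> \<open>finite-dimensional nerve: bounded length of chains of non-identity arrows\<close>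
     (\<exists>N::nat. \<forall>xs. set xs \<subseteq> S \<and> sorted_wrt (\<lambda>A B. le A B \<and> A \<noteq> B) xs \<longrightarrow> length xs \<le> N) \<and>
     \<comment> \<open>products exist whenever there is a common refinement\<close>
     (\<forall>X\<in>S. \<forall>Y\<in>S. common_refinement S le X Y \<longrightarrow> (\<exists>W. is_pmeet S le X Y W)) \<and>
     \<comment> \<open>E is a functor to Sets\<close>
     (\<forall>X\<in>S. \<forall>Y\<in>S. le X Y \<longrightarrow> (\<forall>x\<in>E X. Emap X Y x \<in> E Y)) \<and>
     (\<forall>X\<in>S. \<forall>x\<in>E X. Emap X X x = x) \<and>
     (\<forall>X\<in>S. \<forall>Y\<in>S. \<forall>Z\<in>S. le X Y \<and> le Y Z \<longrightarrow>
        (\<forall>x\<in>E X. Emap X Z x = Emap Y Z (Emap X Y x))) \<and>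
     \<comment> \<open>E(1) is a singleton\<close>
     (\<exists>e. E one = {e}) \<and>
     \<comment> \<open>E(pi) strict surjection for non-identity pi\<close>
     (\<forall>X\<in>S. \<forall>Y\<in>S. le X Y \<and> X \<noteq> Y \<longrightarrow>
        Emap X Y ` E X = E Y \<and> \<not> inj_on (Emap X Y) (E X)) \<and>
     \<comment> \<open>product condition: at most one element over each pair\<close>
     (\<forall>X\<in>S. \<forall>Y\<in>S. common_refinement S le X Y \<longrightarrow>
        inj_on (\<lambda>z. (Emap (pmeet S le X Y) X z, Emap (pmeet S le X Y) Y z)) (E (pmeet S le X Y))) \<and>
     \<comment> \<open>every x is a component of an element of lim E\<close>
     (\<forall>X\<in>S. \<forall>x\<in>E X. \<exists>s\<in>lim_E S le E Emap. s X = x)"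

definition info_morphism ::
  "'a set \<Rightarrow> ('a \<Rightarrow> 'a \<Rightarrow> bool) \<Rightarrow> 'a \<Rightarrow> ('a \<Rightarrow> 'b set) \<Rightarrow> ('a \<Rightarrow> 'a \<Rightarrow> 'b \<Rightarrow> 'b) \<Rightarrow>
   'c set \<Rightarrow> ('c \<Rightarrow> 'c \<Rightarrow> bool) \<Rightarrow> 'c \<Rightarrow> ('c \<Rightarrow> 'd set) \<Rightarrow> ('c \<Rightarrow> 'c \<Rightarrow> 'd \<Rightarrow> 'd) \<Rightarrow>
   ('a \<Rightarrow> 'c) \<Rightarrow> ('a \<Rightarrow> 'b \<Rightarrow> 'd) \<Rightarrow> bool" where
  "info_morphism S le one E Emap S' le' one' E' Emap' phi phis \<longleftrightarrow>
     \<comment> \<open>functor on objects/arrows\<close>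
     (\<forall>X\<in>S. phi X \<in> S') \<and>
     (\<forall>X\<in>S. \<forall>Y\<in>S. le X Y \<longrightarrow> le' (phi X) (phi Y)) \<and>
     \<comment> \<open>preserves the terminal object\<close>
     phi one = one' \<and>
     \<comment> \<open>preserves existing products\<close>
     (\<forall>X\<in>S. \<forall>Y\<in>S. common_refinement S le X Y \<longrightarrow>
        is_pmeet S' le' (phi X) (phi Y) (phi (pmeet S le X Y))) \<and>
     \<comment> \<open>phi# : E => E' o phi natural with surjective components\<close>
     (\<forall>X\<in>S. phis X ` E X = E' (phi X)) \<and>
     (\<forall>X\<in>S. \<forall>Y\<in>S. le X Y \<longrightarrow>
        (\<forall>x\<in>E X. Emap' (phi X) (phi Y) (phis X x) = phis Y (Emap X Y x)))"

definition info_iso ::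
  "'a set \<Rightarrow> ('a \<Rightarrow> 'a \<Rightarrow> bool) \<Rightarrow> 'a \<Rightarrow> ('a \<Rightarrow> 'b set) \<Rightarrow> ('a \<Rightarrow> 'a \<Rightarrow> 'b \<Rightarrow> 'b) \<Rightarrow>
   'c set \<Rightarrow> ('c \<Rightarrow> 'c \<Rightarrow> bool) \<Rightarrow> 'c \<Rightarrow> ('c \<Rightarrow> 'd set) \<Rightarrow> ('c \<Rightarrow> 'c \<Rightarrow> 'd \<Rightarrow> 'd) \<Rightarrow>
   ('a \<Rightarrow> 'c) \<Rightarrow> ('a \<Rightarrow> 'b \<Rightarrow> 'd) \<Rightarrow> bool" where
  "info_iso S le one E Emap S' le' one' E' Emap' phi phis \<longleftrightarrow>
     info_morphism S le one E Emap S' le' one' E' Emap' phi phis \<and>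
     (\<exists>psi psis. info_morphism S' le' one' E' Emap' S le one E Emap psi psis \<and>
        (\<forall>X\<in>S. psi (phi X) = X) \<and> (\<forall>X'\<in>S'. phi (psi X') = X') \<and>
        (\<forall>X\<in>S. \<forall>x\<in>E X. psis (phi X) (phis X x) = x) \<and>
        (\<forall>X'\<in>S'. \<forall>x\<in>E' X'. phis (psi X') (psis X' x) = x))"

definition law_simplex :: "('a \<Rightarrow> 'b set) \<Rightarrow> 'a \<Rightarrow> ('b \<Rightarrow> real) set" where
  "law_simplex E X = {P. (\<forall>x. 0 \<le> P x) \<and> (\<forall>x. x \<notin> E X \<longrightarrow> P x = 0) \<and> sum P (E X) = 1}"

definition margl :: "('a \<Rightarrow> 'b set) \<Rightarrow> ('a \<Rightarrow> 'a \<Rightarrow> 'b \<Rightarrow> 'b) \<Rightarrow> 'a \<Rightarrow> 'a \<Rightarrow> ('b \<Rightarrow> real) \<Rightarrow> 'b \<Rightarrow> real" where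
  "margl E Emap X Y P = (\<lambda>y. if y \<in> E Y then (\<Sum>x\<in>{x \<in> E X. Emap X Y x = y}. P x) else 0)"

definition condl :: "('a \<Rightarrow> 'b set) \<Rightarrow> ('a \<Rightarrow> 'a \<Rightarrow> 'b \<Rightarrow> 'b) \<Rightarrow> 'a \<Rightarrow> 'a \<Rightarrow> ('b \<Rightarrow> real) \<Rightarrow> 'b \<Rightarrow> 'b \<Rightarrow> real" where
  "condl E Emap X Y P y = (\<lambda>x. if x \<in> E X \<and> Emap X Y x = y then P x / margl E Emap X Y P y else 0)"

definition prob_functor ::
  "'a set \<Rightarrow> ('a \<Rightarrow> 'a \<Rightarrow> bool) \<Rightarrow> ('a \<Rightarrow> 'b set) \<Rightarrow> ('a \<Rightarrow> 'a \<Rightarrow> 'b \<Rightarrow> 'b) \<Rightarrow> ('a \<Rightarrow> ('b \<Rightarrow> real) set) \<Rightarrow> bool" where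
  "prob_functor S le E Emap Q \<longleftrightarrow>
     (\<forall>X\<in>S. Q X \<subseteq> law_simplex E X \<and>
        (\<forall>P\<in>Q X. \<forall>P'\<in>law_simplex E X. {x. P' x \<noteq> 0} \<subseteq> {x. P x \<noteq> 0} \<longrightarrow> P' \<in> Q X)) \<and>
     (\<forall>X\<in>S. \<forall>Y\<in>S. le X Y \<longrightarrow> (\<forall>P\<in>Q X. margl E Emap X Y P \<in> Q Y))"

definition adapted ::
  "'a set \<Rightarrow> ('a \<Rightarrow> 'a \<Rightarrow> bool) \<Rightarrow> ('a \<Rightarrow> 'b set) \<Rightarrow> ('a \<Rightarrow> 'a \<Rightarrow> 'b \<Rightarrow> 'b) \<Rightarrow> ('a \<Rightarrow> ('b \<Rightarrow> real) set) \<Rightarrow> bool" where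
  "adapted S le E Emap Q \<longleftrightarrow>
     (\<forall>X\<in>S. \<forall>Y\<in>S. le X Y \<longrightarrow> (\<forall>P\<in>Q X. \<forall>y\<in>E Y.
        margl E Emap X Y P y \<noteq> 0 \<longrightarrow> condl E Emap X Y P y \<in> Q X))"

definition mpush :: "('a \<Rightarrow> 'b set) \<Rightarrow> ('a \<Rightarrow> 'b \<Rightarrow> 'd) \<Rightarrow> 'a \<Rightarrow> ('b \<Rightarrow> real) \<Rightarrow> 'd \<Rightarrow> real" where
  "mpush E phis X P = (\<lambda>x'. \<Sum>x\<in>{x \<in> E X. phis X x = x'}. P x)"

(* cochains: f X [X_1,...,X_n] P; extended by 0 outside the relevant domain *)
type_synonym ('a, 'b) cochain = "'a \<Rightarrow> 'a list \<Rightarrow> ('b \<Rightarrow> real) \<Rightarrow> real"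

definition cvalid ::
  "'a set \<Rightarrow> ('a \<Rightarrow> 'a \<Rightarrow> bool) \<Rightarrow> ('a \<Rightarrow> ('b \<Rightarrow> real) set) \<Rightarrow> nat \<Rightarrow> 'a \<Rightarrow> 'a list \<Rightarrow> ('b \<Rightarrow> real) \<Rightarrow> bool" where
  "cvalid S le Q n X xs P \<longleftrightarrow> X \<in> S \<and> length xs = n \<and> set xs \<subseteq> coarser S le X \<and> P \<in> Q X"

definition is_cochain ::
  "'a set \<Rightarrow> ('a \<Rightarrow> 'a \<Rightarrow> bool) \<Rightarrow> ('a \<Rightarrow> 'b set) \<Rightarrow> ('a \<Rightarrow> 'a \<Rightarrow> 'b \<Rightarrow> 'b) \<Rightarrow> ('a \<Rightarrow> ('b \<Rightarrow> real) set)
    \<Rightarrow> nat \<Rightarrow> ('a, 'b) cochain \<Rightarrow> bool" where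
  "is_cochain S le E Emap Q n f \<longleftrightarrow>
     (\<forall>X xs P. \<not> cvalid S le Q n X xs P \<longrightarrow> f X xs P = 0) \<and>
     \<comment> \<open>measurable on Q_X (Borel sets of the subspace Q_X of real-valued functions)\<close>
     (\<forall>X\<in>S. \<forall>xs. length xs = n \<and> set xs \<subseteq> coarser S le X \<longrightarrow>
        f X xs \<in> borel_measurable (restrict_space borel (Q X))) \<and>
     \<comment> \<open>joint locality\<close>
     (\<forall>X\<in>S. \<forall>Y\<in>S. le X Y \<longrightarrow> (\<forall>xs. length xs = n \<and> set xs \<subseteq> coarser S le Y \<longrightarrow>
        (\<forall>P\<in>Q X. f X xs P = f Y xs (margl E Emap X Y P))))"

definition ys_action ::
  "('a \<Rightarrow> 'b set) \<Rightarrow> ('a \<Rightarrow> 'a \<Rightarrow> 'b \<Rightarrow> 'b) \<Rightarrow> real \<Rightarrow> 'a \<Rightarrow> 'a \<Rightarrow> (('b \<Rightarrow> real) \<Rightarrow> real) \<Rightarrow> ('b \<Rightarrow> real) \<Rightarrow> real" where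
  "ys_action E Emap \<alpha> X Y g P = (\<Sum>y\<in>E Y. (margl E Emap X Y P y) powr \<alpha> * g (condl E Emap X Y P y))"

definition cobdry ::
  "'a set \<Rightarrow> ('a \<Rightarrow> 'a \<Rightarrow> bool) \<Rightarrow> ('a \<Rightarrow> 'b set) \<Rightarrow> ('a \<Rightarrow> 'a \<Rightarrow> 'b \<Rightarrow> 'b) \<Rightarrow> ('a \<Rightarrow> ('b \<Rightarrow> real) set)
    \<Rightarrow> real \<Rightarrow> nat \<Rightarrow> ('a, 'b) cochain \<Rightarrow> ('a, 'b) cochain" where
  "cobdry S le E Emap Q \<alpha> n f = (\<lambda>X xs P.
     if cvalid S le Q (Suc n) X xs P then
       ys_action E Emap \<alpha> X (hd xs) (f X (tl xs)) P
       + (\<Sum>k\<in>{1..n}. (-1::real) ^ k *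
            f X (take (k - 1) xs @ [pmeet S le (xs ! (k - 1)) (xs ! k)] @ drop (k + 1) xs) P)
       + (-1::real) ^ (Suc n) * f X (butlast xs) P
     else 0)"

definition is_cocycle ::
  "'a set \<Rightarrow> ('a \<Rightarrow> 'a \<Rightarrow> bool) \<Rightarrow> ('a \<Rightarrow> 'b set) \<Rightarrow> ('a \<Rightarrow> 'a \<Rightarrow> 'b \<Rightarrow> 'b) \<Rightarrow> ('a \<Rightarrow> ('b \<Rightarrow> real) set)
    \<Rightarrow> real \<Rightarrow> nat \<Rightarrow> ('a, 'b) cochain \<Rightarrow> bool" where
  "is_cocycle S le E Emap Q \<alpha> n f \<longleftrightarrow>
     is_cochain S le E Emap Q n f \<and> cobdry S le E Emap Q \<alpha> n f = (\<lambda>_ _ _. 0)"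

definition is_coboundary ::
  "'a set \<Rightarrow> ('a \<Rightarrow> 'a \<Rightarrow> bool) \<Rightarrow> ('a \<Rightarrow> 'b set) \<Rightarrow> ('a \<Rightarrow> 'a \<Rightarrow> 'b \<Rightarrow> 'b) \<Rightarrow> ('a \<Rightarrow> ('b \<Rightarrow> real) set)
    \<Rightarrow> real \<Rightarrow> nat \<Rightarrow> ('a, 'b) cochain \<Rightarrow> bool" where
  "is_coboundary S le E Emap Q \<alpha> n f \<longleftrightarrow>
     (if n = 0 then f = (\<lambda>_ _ _. 0)
      else (\<exists>g. is_cochain S le E Emap Q (n - 1) g \<and> f = cobdry S le E Emap Q \<alpha> (n - 1) g))"

definition pullback ::
  "'a set \<Rightarrow> ('a \<Rightarrow> 'a \<Rightarrow> bool) \<Rightarrow> ('a \<Rightarrow> 'b set) \<Rightarrow> ('a \<Rightarrow> ('b \<Rightarrow> real) set) \<Rightarrow>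
   ('a \<Rightarrow> 'c) \<Rightarrow> ('a \<Rightarrow> 'b \<Rightarrow> 'd) \<Rightarrow> nat \<Rightarrow> ('c, 'd) cochain \<Rightarrow> ('a, 'b) cochain" where
  "pullback S le E Q phi phis n f = (\<lambda>Y xs P.
     if cvalid S le Q n Y xs P then f (phi Y) (map phi xs) (mpush E phis Y P) else 0)"

definition induces_iso_in_degree ::
  "'a set \<Rightarrow> ('a \<Rightarrow> 'a \<Rightarrow> bool) \<Rightarrow> ('a \<Rightarrow> 'b set) \<Rightarrow> ('a \<Rightarrow> 'a \<Rightarrow> 'b \<Rightarrow> 'b) \<Rightarrow> ('a \<Rightarrow> ('b \<Rightarrow> real) set) \<Rightarrow>
   'c set \<Rightarrow> ('c \<Rightarrow> 'c \<Rightarrow> bool) \<Rightarrow> ('c \<Rightarrow> 'd set) \<Rightarrow> ('c \<Rightarrow> 'c \<Rightarrow> 'd \<Rightarrow> 'd) \<Rightarrow> ('c \<Rightarrow> ('d \<Rightarrow> real) set) \<Rightarrow>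
   ('a \<Rightarrow> 'c) \<Rightarrow> ('a \<Rightarrow> 'b \<Rightarrow> 'd) \<Rightarrow> real \<Rightarrow> nat \<Rightarrow> bool" where
  "induces_iso_in_degree S le E Emap Q S' le' E' Emap' Q' phi phis \<alpha> n \<longleftrightarrow>
     \<comment> \<open>phi^* maps cochains to cochains\<close>
     (\<forall>f. is_cochain S' le' E' Emap' Q' n f \<longrightarrow> is_cochain S le E Emap Q n (pullback S le E Q phi phis n f)) \<and>
     \<comment> \<open>phi^* commutes with the is_coboundary\<close>
     (\<forall>f. is_cochain S' le' E' Emap' Q' n f \<longrightarrow>
        pullback S le E Q phi phis (Suc n) (cobdry S' le' E' Emap' Q' \<alpha> n f)
        = cobdry S le E Emap Q \<alpha> n (pullback S le E Q phi phis n f)) \<and>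
     \<comment> \<open>injective on cohomology\<close>
     (\<forall>f. is_cocycle S' le' E' Emap' Q' \<alpha> n f \<and>
          is_coboundary S le E Emap Q \<alpha> n (pullback S le E Q phi phis n f) \<longrightarrow>
          is_coboundary S' le' E' Emap' Q' \<alpha> n f) \<and>
     \<comment> \<open>surjective on cohomology\<close>
     (\<forall>g. is_cocycle S le E Emap Q \<alpha> n g \<longrightarrow>
        (\<exists>f. is_cocycle S' le' E' Emap' Q' \<alpha> n f \<and>
             is_coboundary S le E Emap Q \<alpha> n (\<lambda>Y xs P. g Y xs P - pullback S le E Q phi phis n f Y xs P)))"

end

theory Submission imports Defs begin

lemma IS_anti: assumes "info_structure S le one E Emap" "X \<in> S" "Y \<in> S" "le X Y" "le Y X" shows "X = Y"
proof -
  have "\<forall>X\<in>S. \<forall>Y\<in>S. le X Y \<and> le Y X \<longrightarrow> X = Y"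
    using assms(1)[unfolded info_structure_def] by (elim conjE)
  then show ?thesis using assms by blast
qed
lemma IS_meet: assumes "info_structure S le one E Emap" "X \<in> S" "Y \<in> S" "common_refinement S le X Y" shows "\<exists>W. is_pmeet S le X Y W"
proof -
  have "\<forall>X\<in>S. \<forall>Y\<in>S. common_refinement S le X Y \<longrightarrow> (\<exists>W. is_pmeet S le X Y W)"
    using assms(1)[unfolded info_structure_def] by (elim conjE)
  then show ?thesis using assms by blast
qed

lemma IS_trans: assumes "info_structure S le one E Emap" "X \<in> S" "Y \<in> S" "Z \<in> S" "le X Y" "le Y Z" shows "le X Z"
proof -
  have "\<forall>X\<in>S. \<forall>Y\<in>S. \<forall>Z\<in>S. le X Y \<and> le Y Z \<longrightarrow> le X Z"
    using assms(1)[unfolded info_structure_def] by (elim conjE)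
  then show ?thesis using assms by blast
qed
lemma IS_Emap: assumes "info_structure S le one E Emap" "X \<in> S" "Y \<in> S" "le X Y" "x \<in> E X" shows "Emap X Y x \<in> E Y"
proof -
  have "\<forall>X\<in>S. \<forall>Y\<in>S. le X Y \<longrightarrow> (\<forall>x\<in>E X. Emap X Y x \<in> E Y)"
    using assms(1)[unfolded info_structure_def] by (elim conjE)
  then show ?thesis using assms by blast
qed
lemma MOR: assumes "info_morphism S le one E Emap S' le' one' E' Emap' phi phis"
  shows "\<forall>X\<in>S. phi X \<in> S'" "\<forall>X\<in>S. \<forall>Y\<in>S. le X Y \<longrightarrow> le' (phi X) (phi Y)"
   "\<forall>X\<in>S. \<forall>Y\<in>S. common_refinement S le X Y \<longrightarrow> is_pmeet S' le' (phi X) (phi Y) (phi (pmeet S le X Y))"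
   "\<forall>X\<in>S. phis X ` E X = E' (phi X)"
   "\<forall>X\<in>S. \<forall>Y\<in>S. le X Y \<longrightarrow> (\<forall>x\<in>E X. Emap' (phi X) (phi Y) (phis X x) = phis Y (Emap X Y x))"
  using assms[unfolded info_morphism_def] apply -
  apply (elim conjE, assumption)+
  done
lemma PFD: assumes "prob_functor S le E Emap Q"
  shows "\<forall>X\<in>S. Q X \<subseteq> law_simplex E X" "\<forall>X\<in>S. \<forall>Y\<in>S. le X Y \<longrightarrow> (\<forall>P\<in>Q X. margl E Emap X Y P \<in> Q Y)"
proof -
  have "(\<forall>X\<in>S. Q X \<subseteq> law_simplex E X \<and>
        (\<forall>P\<in>Q X. \<forall>P'\<in>law_simplex E X. {x. P' x \<noteq> 0} \<subseteq> {x. P x \<noteq> 0} \<longrightarrow> P' \<in> Q X)) \<and>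
    (\<forall>X\<in>S. \<forall>Y\<in>S. le X Y \<longrightarrow> (\<forall>P\<in>Q X. margl E Emap X Y P \<in> Q Y))"
    using assms[unfolded prob_functor_def] .
  then show "\<forall>X\<in>S. Q X \<subseteq> law_simplex E X" "\<forall>X\<in>S. \<forall>Y\<in>S. le X Y \<longrightarrow> (\<forall>P\<in>Q X. margl E Emap X Y P \<in> Q Y)"
    by blast+
qed
lemma COCH: assumes "is_cochain S le E Emap Q n f"
  shows "\<forall>X xs P. \<not> cvalid S le Q n X xs P \<longrightarrow> f X xs P = 0"
     "\<forall>X\<in>S. \<forall>xs. length xs = n \<and> set xs \<subseteq> coarser S le X \<longrightarrow>
        f X xs \<in> borel_measurable (restrict_space borel (Q X))"
     "\<forall>X\<in>S. \<forall>Y\<in>S. le X Y \<longrightarrow> (\<forall>xs. length xs = n \<and> set xs \<subseteq> coarser S le Y \<longrightarrow>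
        (\<forall>P\<in>Q X. f X xs P = f Y xs (margl E Emap X Y P)))"
  using assms[unfolded is_cochain_def] apply -
  apply (elim conjE, assumption)+
  done

lemma pmeet_eq:
  assumes IS: "info_structure S le one E Emap" and W: "is_pmeet S le X Y W"
  shows "pmeet S le X Y = W"
  unfolding pmeet_def
proof (rule the_equality)
  show "is_pmeet S le X Y W" by (rule W)
  fix V assume V: "is_pmeet S le X Y V"
  have "V \<in> S" "W \<in> S" "le V W" "le W V" using V W unfolding is_pmeet_def by auto
  then show "V = W" using IS_anti[OF IS] by blast
qed

lemma pmeet_coarser:
  assumes IS: "info_structure S le one E Emap" and Y: "Y \<in> S"
    and a: "a \<in> coarser S le Y" and b: "b \<in> coarser S le Y"
  shows "is_pmeet S le a b (pmeet S le a b)" "pmeet S le a b \<in> coarser S le Y"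
proof -
  have cr: "common_refinement S le a b" using a b Y unfolding coarser_def common_refinement_def by blast
  have "a \<in> S" "b \<in> S" using a b unfolding coarser_def by auto
  then obtain W where W: "is_pmeet S le a b W" using IS_meet[OF IS _ _ cr] by blast
  then show "is_pmeet S le a b (pmeet S le a b)" using pmeet_eq[OF IS W] by simp
  then show "pmeet S le a b \<in> coarser S le Y" using a b Y unfolding is_pmeet_def coarser_def by blast
qed

locale pb =
  fixes S :: "'a set" and le :: "'a \<Rightarrow> 'a \<Rightarrow> bool" and one :: 'a
    and E :: "'a \<Rightarrow> 'b set" and Emap :: "'a \<Rightarrow> 'a \<Rightarrow> 'b \<Rightarrow> 'b"
    and S' :: "'c set" and le' :: "'c \<Rightarrow> 'c \<Rightarrow> bool" and one' :: 'c
    and E' :: "'c \<Rightarrow> 'd set" and Emap' :: "'c \<Rightarrow> 'c \<Rightarrow> 'd \<Rightarrow> 'd"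
    and phi :: "'a \<Rightarrow> 'c" and phis :: "'a \<Rightarrow> 'b \<Rightarrow> 'd"
    and Q :: "'a \<Rightarrow> ('b \<Rightarrow> real) set" and Q' :: "'c \<Rightarrow> ('d \<Rightarrow> real) set"
  assumes IS: "info_structure S le one E Emap"
    and IS': "info_structure S' le' one' E' Emap'"
    and fin: "\<forall>X\<in>S. finite (E X)"
    and fin': "\<forall>X'\<in>S'. finite (E' X')"
    and mor: "info_morphism S le one E Emap S' le' one' E' Emap' phi phis"
    and inj: "\<forall>X\<in>S. inj_on (phis X) (E X)"
    and PF: "prob_functor S le E Emap Q" and AD: "adapted S le E Emap Q"
    and PF': "prob_functor S' le' E' Emap' Q'"
    and QQ: "\<forall>X\<in>S. Q' (phi X) = mpush E phis X ` Q X"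
begin

lemma phiS: "X \<in> S \<Longrightarrow> phi X \<in> S'" using MOR(1)[OF mor] by blast
lemma phile: "X \<in> S \<Longrightarrow> Y \<in> S \<Longrightarrow> le X Y \<Longrightarrow> le' (phi X) (phi Y)" using MOR(2)[OF mor] by blast
lemma phisim: "X \<in> S \<Longrightarrow> phis X ` E X = E' (phi X)" using MOR(4)[OF mor] by blast
lemma nat: "X \<in> S \<Longrightarrow> Y \<in> S \<Longrightarrow> le X Y \<Longrightarrow> x \<in> E X \<Longrightarrow> Emap' (phi X) (phi Y) (phis X x) = phis Y (Emap X Y x)"
  using MOR(5)[OF mor] by blast
lemma Emap_in: "X \<in> S \<Longrightarrow> Y \<in> S \<Longrightarrow> le X Y \<Longrightarrow> x \<in> E X \<Longrightarrow> Emap X Y x \<in> E Y"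
  using IS_Emap[OF IS] by blast

lemma mpush_in: "X \<in> S \<Longrightarrow> P \<in> Q X \<Longrightarrow> mpush E phis X P \<in> Q' (phi X)" using QQ by blast

lemma coarser_map: "X \<in> S \<Longrightarrow> Z \<in> coarser S le X \<Longrightarrow> phi Z \<in> coarser S' le' (phi X)"
  unfolding coarser_def using phiS phile by blast

lemma cvalid_map: "cvalid S le Q n X xs P \<Longrightarrow> cvalid S' le' Q' n (phi X) (map phi xs) (mpush E phis X P)"
  unfolding cvalid_def using coarser_map phiS mpush_in by auto

lemma pmeet_map:
  assumes Y: "Y \<in> S" and a: "a \<in> coarser S le Y" and b: "b \<in> coarser S le Y"
  shows "phi (pmeet S le a b) = pmeet S' le' (phi a) (phi b)"
proof -
  have cr: "common_refinement S le a b" using a b Y unfolding coarser_def common_refinement_def by blast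
  have "is_pmeet S' le' (phi a) (phi b) (phi (pmeet S le a b))"
    using MOR(3)[OF mor] cr a b unfolding coarser_def by blast
  from pmeet_eq[OF IS' this] show ?thesis by simp
qed

lemma margl_mpush:
  assumes X: "X \<in> S" and Y: "Y \<in> S" and le: "le X Y"
  shows "margl E' Emap' (phi X) (phi Y) (mpush E phis X P) = mpush E phis Y (margl E Emap X Y P)"
proof
  fix d
  have fX: "finite (E X)" and fY: "finite (E Y)" using fin X Y by auto
  show "margl E' Emap' (phi X) (phi Y) (mpush E phis X P) d = mpush E phis Y (margl E Emap X Y P) d"
  proof (cases "d \<in> E' (phi Y)")
    case True
    have "margl E' Emap' (phi X) (phi Y) (mpush E phis X P) d =
       (\<Sum>x'\<in>{x' \<in> E' (phi X). Emap' (phi X) (phi Y) x' = d}. \<Sum>x\<in>{x \<in> E X. phis X x = x'}. P x)"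
      using True unfolding margl_def mpush_def by simp
    also have "\<dots> = (\<Sum>x\<in>{x \<in> E X. phis Y (Emap X Y x) = d}. P x)"
      apply (subst sum.UNION_disjoint[symmetric])
      using fX fin' phiS[OF X] apply (auto intro: finite_subset)
      apply (rule sum.cong)
      using phisim[OF X] nat[OF X Y le] apply auto
      done
    also have "\<dots> = (\<Sum>y\<in>{y \<in> E Y. phis Y y = d}. \<Sum>x\<in>{x \<in> E X. Emap X Y x = y}. P x)"
      apply (subst sum.UNION_disjoint[symmetric])
      using fX fY apply (auto intro: finite_subset)
      apply (rule sum.cong)
      using Emap_in[OF X Y le] apply auto
      done
    also have "\<dots> = mpush E phis Y (margl E Emap X Y P) d"
      unfolding mpush_def margl_def by (rule sum.cong) auto
    finally show ?thesis .
  next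
    case False
    have e0: "{y \<in> E Y. phis Y y = d} = {}" using False phisim[OF Y] by auto
    show ?thesis using False unfolding margl_def mpush_def e0 by simp
  qed
qed


lemma inj_phis: "X \<in> S \<Longrightarrow> x \<in> E X \<Longrightarrow> y \<in> E X \<Longrightarrow> phis X x = phis X y \<longleftrightarrow> x = y"
  using inj unfolding inj_on_def by blast

lemma mpush_at:
  assumes X: "X \<in> S" and x: "x \<in> E X"
  shows "mpush E phis X G (phis X x) = G x"
proof -
  have "{y \<in> E X. phis X y = phis X x} = {x}" using inj_phis[OF X] x by auto
  then show ?thesis unfolding mpush_def by simp
qed

lemma margl_at:
  assumes Y: "Y \<in> S" and Z: "Z \<in> S" and le: "le Y Z" and y: "y \<in> E Z"
  shows "margl E' Emap' (phi Y) (phi Z) (mpush E phis Y P) (phis Z y) = margl E Emap Y Z P y"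
  using margl_mpush[OF Y Z le] mpush_at[OF Z y] by simp

lemma condl_mpush:
  assumes Y: "Y \<in> S" and Z: "Z \<in> S" and le: "le Y Z" and y: "y \<in> E Z"
  shows "condl E' Emap' (phi Y) (phi Z) (mpush E phis Y P) (phis Z y) = mpush E phis Y (condl E Emap Y Z P y)"
proof
  fix d
  show "condl E' Emap' (phi Y) (phi Z) (mpush E phis Y P) (phis Z y) d = mpush E phis Y (condl E Emap Y Z P y) d"
  proof (cases "d \<in> E' (phi Y)")
    case True
    then obtain x0 where x0: "x0 \<in> E Y" "d = phis Y x0" using phisim[OF Y] by blast
    have e: "Emap' (phi Y) (phi Z) d = phis Z y \<longleftrightarrow> Emap Y Z x0 = y"
      using x0 nat[OF Y Z le x0(1)] inj_phis[OF Z Emap_in[OF Y Z le x0(1)] y] by simp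
    show ?thesis
      using True x0 e mpush_at[OF Y x0(1)] margl_at[OF Y Z le y]
      unfolding condl_def by simp
  next
    case False
    have e0: "{x \<in> E Y. phis Y x = d} = {}" using False phisim[OF Y] by auto
    show ?thesis using False unfolding condl_def mpush_def e0 by simp
  qed
qed

lemma ys_action_map:
  assumes Y: "Y \<in> S" and Z: "Z \<in> S" and le: "le Y Z"
    and g: "\<And>y. y \<in> E Z \<Longrightarrow> margl E Emap Y Z P y \<noteq> 0 \<Longrightarrow> g (condl E Emap Y Z P y) = g' (mpush E phis Y (condl E Emap Y Z P y))"
  shows "ys_action E' Emap' \<alpha> (phi Y) (phi Z) g' (mpush E phis Y P) = ys_action E Emap \<alpha> Y Z g P"
proof -
  have "ys_action E' Emap' \<alpha> (phi Y) (phi Z) g' (mpush E phis Y P)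
     = (\<Sum>y\<in>phis Z ` E Z. margl E' Emap' (phi Y) (phi Z) (mpush E phis Y P) y powr \<alpha> *
           g' (condl E' Emap' (phi Y) (phi Z) (mpush E phis Y P) y))"
    unfolding ys_action_def using phisim[OF Z] by simp
  also have "\<dots> = (\<Sum>y\<in>E Z. margl E' Emap' (phi Y) (phi Z) (mpush E phis Y P) (phis Z y) powr \<alpha> *
           g' (condl E' Emap' (phi Y) (phi Z) (mpush E phis Y P) (phis Z y)))"
    using inj Z by (subst sum.reindex) auto
  also have "\<dots> = ys_action E Emap \<alpha> Y Z g P"
    unfolding ys_action_def
    apply (rule sum.cong, simp)
    subgoal for y
      using margl_at[OF Y Z le, of y P] condl_mpush[OF Y Z le, of y P] g[of y]
      by (cases "margl E Emap Y Z P y = 0") auto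
    done
  finally show ?thesis .
qed


lemma trans_le: "X \<in> S \<Longrightarrow> Y \<in> S \<Longrightarrow> Z \<in> S \<Longrightarrow> le X Y \<Longrightarrow> le Y Z \<Longrightarrow> le X Z"
  using IS_trans[OF IS] by blast

lemma margl_Q: "X \<in> S \<Longrightarrow> Y \<in> S \<Longrightarrow> le X Y \<Longrightarrow> P \<in> Q X \<Longrightarrow> margl E Emap X Y P \<in> Q Y"
  using PFD(2)[OF PF] by blast

lemma condl_Q: "X \<in> S \<Longrightarrow> Y \<in> S \<Longrightarrow> le X Y \<Longrightarrow> P \<in> Q X \<Longrightarrow> y \<in> E Y \<Longrightarrow> margl E Emap X Y P y \<noteq> 0 \<Longrightarrow> condl E Emap X Y P y \<in> Q X"
  using AD unfolding adapted_def by blast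

lemma mpush_cont: "continuous_on UNIV (mpush E phis X)"
  unfolding mpush_def
  by (intro continuous_on_coordinatewise_then_product continuous_on_sum continuous_on_product_coordinates)

lemma mpush_meas:
  assumes X: "X \<in> S"
  shows "mpush E phis X \<in> measurable (restrict_space borel (Q X)) (restrict_space borel (Q' (phi X)))"
  apply (rule measurable_restrict_space3)
  using borel_measurable_continuous_onI[OF mpush_cont] apply simp
  using mpush_in[OF X] by blast

lemma pullback_cochain:
  assumes f: "is_cochain S' le' E' Emap' Q' n f"
  shows "is_cochain S le E Emap Q n (pullback S le E Q phi phis n f)"
  unfolding is_cochain_def
proof (intro conjI)
  show "\<forall>X xs P. \<not> cvalid S le Q n X xs P \<longrightarrow> pullback S le E Q phi phis n f X xs P = 0"
    unfolding pullback_def by simp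
  show "\<forall>X\<in>S. \<forall>xs. length xs = n \<and> set xs \<subseteq> coarser S le X \<longrightarrow>
        pullback S le E Q phi phis n f X xs \<in> borel_measurable (restrict_space borel (Q X))"
  proof (intro ballI allI impI)
    fix X xs assume X: "X \<in> S" and xs: "length xs = n \<and> set xs \<subseteq> coarser S le X"
    have m: "set (map phi xs) \<subseteq> coarser S' le' (phi X)" using xs coarser_map[OF X] by auto
    have hf: "f (phi X) (map phi xs) \<in> borel_measurable (restrict_space borel (Q' (phi X)))"
      using COCH(2)[OF f] phiS[OF X] xs m by auto
    have "(\<lambda>P. f (phi X) (map phi xs) (mpush E phis X P)) \<in> borel_measurable (restrict_space borel (Q X))"
      using measurable_comp[OF mpush_meas[OF X] hf] by (simp add: comp_def)
    then show "pullback S le E Q phi phis n f X xs \<in> borel_measurable (restrict_space borel (Q X))"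
      apply (subst measurable_cong[where g="\<lambda>P. f (phi X) (map phi xs) (mpush E phis X P)"])
      using X xs unfolding pullback_def cvalid_def by (auto simp: space_restrict_space)
  qed
  show "\<forall>X\<in>S. \<forall>Y\<in>S. le X Y \<longrightarrow> (\<forall>xs. length xs = n \<and> set xs \<subseteq> coarser S le Y \<longrightarrow>
        (\<forall>P\<in>Q X. pullback S le E Q phi phis n f X xs P = pullback S le E Q phi phis n f Y xs (margl E Emap X Y P)))"
  proof (intro ballI allI impI)
    fix X Y xs P assume X: "X \<in> S" and Y: "Y \<in> S" and le: "le X Y"
      and xs: "length xs = n \<and> set xs \<subseteq> coarser S le Y" and P: "P \<in> Q X"
    have xsX: "set xs \<subseteq> coarser S le X" using xs trans_le[OF X Y] le unfolding coarser_def by auto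
    have c1: "cvalid S le Q n X xs P" using X xs xsX P unfolding cvalid_def by auto
    have c2: "cvalid S le Q n Y xs (margl E Emap X Y P)" using Y xs margl_Q[OF X Y le P] unfolding cvalid_def by auto
    have m: "set (map phi xs) \<subseteq> coarser S' le' (phi Y)" using xs coarser_map[OF Y] by auto
    have "f (phi X) (map phi xs) (mpush E phis X P) = f (phi Y) (map phi xs) (margl E' Emap' (phi X) (phi Y) (mpush E phis X P))"
      using COCH(3)[OF f] phiS[OF X] phiS[OF Y] phile[OF X Y le] xs m mpush_in[OF X P] by auto
    then show "pullback S le E Q phi phis n f X xs P = pullback S le E Q phi phis n f Y xs (margl E Emap X Y P)"
      using c1 c2 margl_mpush[OF X Y le] unfolding pullback_def by simp
  qed
qed


lemma pullback_cobdry: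
  "pullback S le E Q phi phis (Suc n) (cobdry S' le' E' Emap' Q' \<alpha> n f)
   = cobdry S le E Emap Q \<alpha> n (pullback S le E Q phi phis n f)"
proof (intro ext)
  fix Y xs P
  show "pullback S le E Q phi phis (Suc n) (cobdry S' le' E' Emap' Q' \<alpha> n f) Y xs P
   = cobdry S le E Emap Q \<alpha> n (pullback S le E Q phi phis n f) Y xs P"
  proof (cases "cvalid S le Q (Suc n) Y xs P")
    case False
    then show ?thesis unfolding pullback_def cobdry_def by simp
  next
    case True
    have Y: "Y \<in> S" and len: "length xs = Suc n" and xsc: "set xs \<subseteq> coarser S le Y" and P: "P \<in> Q Y"
      using True unfolding cvalid_def by auto
    have cv': "cvalid S' le' Q' (Suc n) (phi Y) (map phi xs) (mpush E phis Y P)" using cvalid_map[OF True] .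
    have ne: "xs \<noteq> []" using len by auto
    have hdc: "hd xs \<in> coarser S le Y" using ne xsc by (cases xs) auto
    then have Z: "hd xs \<in> S" and leZ: "le Y (hd xs)" unfolding coarser_def by auto
    have tlc: "set (tl xs) \<subseteq> coarser S le Y" using xsc ne by (cases xs) auto
    have t1: "ys_action E' Emap' \<alpha> (phi Y) (hd (map phi xs)) (f (phi Y) (tl (map phi xs))) (mpush E phis Y P)
      = ys_action E Emap \<alpha> Y (hd xs) (pullback S le E Q phi phis n f Y (tl xs)) P"
      using ne apply (simp add: hd_map map_tl)
      apply (rule ys_action_map[OF Y Z leZ])
      subgoal for y
        using condl_Q[OF Y Z leZ P, of y] tlc len Y unfolding pullback_def cvalid_def by (simp add: map_tl)
      done
    have t2: "(\<Sum>k\<in>{1..n}. (-1::real) ^ k *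
            f (phi Y) (take (k - 1) (map phi xs) @ [pmeet S' le' (map phi xs ! (k - 1)) (map phi xs ! k)] @ drop (k + 1) (map phi xs)) (mpush E phis Y P))
      = (\<Sum>k\<in>{1..n}. (-1::real) ^ k *
            pullback S le E Q phi phis n f Y (take (k - 1) xs @ [pmeet S le (xs ! (k - 1)) (xs ! k)] @ drop (k + 1) xs) P)"
    proof (rule sum.cong, simp)
      fix k assume k: "k \<in> {1..n}"
      have a: "xs ! (k - 1) \<in> coarser S le Y" and b: "xs ! k \<in> coarser S le Y"
        using k len xsc by (auto simp: subset_iff)
      have pm: "pmeet S le (xs ! (k - 1)) (xs ! k) \<in> coarser S le Y" using pmeet_coarser(2)[OF IS Y a b] .
      have cv: "cvalid S le Q n Y (take (k - 1) xs @ [pmeet S le (xs ! (k - 1)) (xs ! k)] @ drop (k + 1) xs) P"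
        unfolding cvalid_def using Y P k len xsc pm
        by (auto dest: in_set_takeD in_set_dropD)
      have mp: "map phi (take (k - 1) xs @ [pmeet S le (xs ! (k - 1)) (xs ! k)] @ drop (k + 1) xs)
          = take (k - 1) (map phi xs) @ [pmeet S' le' (map phi xs ! (k - 1)) (map phi xs ! k)] @ drop (k + 1) (map phi xs)"
      proof -
        have n1: "map phi xs ! (k - 1) = phi (xs ! (k - 1))" using k len by (intro nth_map) auto
        have n2: "map phi xs ! k = phi (xs ! k)" using k len by (intro nth_map) auto
        show ?thesis unfolding n1 n2 using pmeet_map[OF Y a b] by (simp add: take_map drop_map)
      qed
      show "(-1::real) ^ k *
            f (phi Y) (take (k - 1) (map phi xs) @ [pmeet S' le' (map phi xs ! (k - 1)) (map phi xs ! k)] @ drop (k + 1) (map phi xs)) (mpush E phis Y P)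
          = (-1::real) ^ k * pullback S le E Q phi phis n f Y (take (k - 1) xs @ [pmeet S le (xs ! (k - 1)) (xs ! k)] @ drop (k + 1) xs) P"
        using cv mp unfolding pullback_def by simp
    qed
    have t3: "f (phi Y) (butlast (map phi xs)) (mpush E phis Y P) = pullback S le E Q phi phis n f Y (butlast xs) P"
    proof -
      have "cvalid S le Q n Y (butlast xs) P" unfolding cvalid_def using Y P len xsc
        by (auto dest: in_set_butlastD)
      then show ?thesis unfolding pullback_def by (simp add: map_butlast)
    qed
    show ?thesis
      using True cv' t1 t2 t3 unfolding pullback_def cobdry_def by simp
  qed
qed


end

lemma mpush_inv:
  assumes A: "finite A" and fB: "f ` A = B" and gB: "g ` B \<subseteq> A" and gf: "\<forall>x\<in>A. g (f x) = x"
    and P0: "\<forall>x. x \<notin> A \<longrightarrow> P x = 0"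
  shows "(\<lambda>x. \<Sum>x'\<in>{x'\<in>B. g x' = x}. \<Sum>y\<in>{y\<in>A. f y = x'}. P y) = P"
proof
  fix x
  show "(\<Sum>x'\<in>{x'\<in>B. g x' = x}. \<Sum>y\<in>{y\<in>A. f y = x'}. P y) = P x"
  proof (cases "x \<in> A")
    case True
    have 1: "{x'\<in>B. g x' = x} = {f x}" using True fB gf by auto
    have 2: "{y\<in>A. f y = f x} = {x}" using True gf by (auto, metis)
    show ?thesis using 1 2 by simp
  next
    case False
    have e0: "{x'\<in>B. g x' = x} = {}" using False gB by auto
    show ?thesis using False P0 unfolding e0 by simp
  qed
qed

lemma pullback_zero: "pullback S le E Q phi phis n (\<lambda>_ _ _. 0) = (\<lambda>_ _ _. 0)"
  unfolding pullback_def by (intro ext) simp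

lemma zero_cochain: "is_cochain S le E Emap Q n (\<lambda>_ _ _. 0)"
  unfolding is_cochain_def by simp

lemma cobdry_zero: "cobdry S le E Emap Q \<alpha> n (\<lambda>_ _ _. 0) = (\<lambda>_ _ _. 0)"
  unfolding cobdry_def ys_action_def by (intro ext) simp

lemma roundtrip:
  assumes f: "is_cochain S' le' E' Emap' Q' n f"
    and psiS: "\<forall>X'\<in>S'. psi X' \<in> S \<and> phi (psi X') = X'"
    and psic: "\<forall>X' Z. X' \<in> S' \<longrightarrow> Z \<in> coarser S' le' X' \<longrightarrow> psi Z \<in> coarser S le (psi X')"
    and psiQ: "\<forall>X'\<in>S'. \<forall>P'\<in>Q' X'. mpush E' psis X' P' \<in> Q (psi X')"
    and rt: "\<forall>X'\<in>S'. \<forall>P'\<in>Q' X'. mpush E phis (psi X') (mpush E' psis X' P') = P'"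
  shows "pullback S' le' E' Q' psi psis n (pullback S le E Q phi phis n f) = f"
proof (intro ext)
  fix X' xs P'
  show "pullback S' le' E' Q' psi psis n (pullback S le E Q phi phis n f) X' xs P' = f X' xs P'"
  proof (cases "cvalid S' le' Q' n X' xs P'")
    case True
    then have X': "X' \<in> S'" and len: "length xs = n" and xsc: "set xs \<subseteq> coarser S' le' X'" and P: "P' \<in> Q' X'"
      unfolding cvalid_def by auto
    have cv: "cvalid S le Q n (psi X') (map psi xs) (mpush E' psis X' P')"
      unfolding cvalid_def using X' len xsc P psiS psic psiQ by auto
    have mm: "map phi (map psi xs) = xs"
      using xsc psiS by (induction xs) (auto simp: coarser_def)
    show ?thesis using True cv mm psiS X' rt P unfolding pullback_def by simp
  next
    case False
    then show ?thesis using COCH(1)[OF f] unfolding pullback_def by simp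
  qed
qed


theorem corollary4p4:
  fixes S :: "'a set" and le :: "'a \<Rightarrow> 'a \<Rightarrow> bool" and one :: 'a
    and E :: "'a \<Rightarrow> 'b set" and Emap :: "'a \<Rightarrow> 'a \<Rightarrow> 'b \<Rightarrow> 'b"
    and S' :: "'c set" and le' :: "'c \<Rightarrow> 'c \<Rightarrow> bool" and one' :: 'c
    and E' :: "'c \<Rightarrow> 'd set" and Emap' :: "'c \<Rightarrow> 'c \<Rightarrow> 'd \<Rightarrow> 'd"
    and phi :: "'a \<Rightarrow> 'c" and phis :: "'a \<Rightarrow> 'b \<Rightarrow> 'd"
    and Q :: "'a \<Rightarrow> ('b \<Rightarrow> real) set" and Q' :: "'c \<Rightarrow> ('d \<Rightarrow> real) set"
    and \<alpha> :: real
  assumes "info_structure S le one E Emap"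
    and "info_structure S' le' one' E' Emap'"
    and "\<forall>X\<in>S. finite (E X)"
    and "\<forall>X'\<in>S'. finite (E' X')"
    and "info_iso S le one E Emap S' le' one' E' Emap' phi phis"
    and "prob_functor S le E Emap Q" and "adapted S le E Emap Q"
    and "prob_functor S' le' E' Emap' Q'" and "adapted S' le' E' Emap' Q'"
    and "\<forall>X\<in>S. Q' (phi X) = mpush E phis X ` Q X"
    and "\<alpha> > 0"
  shows "\<forall>n. induces_iso_in_degree S le E Emap Q S' le' E' Emap' Q' phi phis \<alpha> n"
proof
  fix n
  note IS = assms(1) and IS' = assms(2) and fin = assms(3) and fin' = assms(4)
  note PF = assms(6) and AD = assms(7) and PF' = assms(8) and AD' = assms(9) and QQ = assms(10)
  have mor: "info_morphism S le one E Emap S' le' one' E' Emap' phi phis"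
    using assms(5) unfolding info_iso_def by blast
  obtain psi psis where mor2: "info_morphism S' le' one' E' Emap' S le one E Emap psi psis"
    and i1: "\<forall>X\<in>S. psi (phi X) = X" and i2: "\<forall>X'\<in>S'. phi (psi X') = X'"
    and i3: "\<forall>X\<in>S. \<forall>x\<in>E X. psis (phi X) (phis X x) = x"
    and i4: "\<forall>X'\<in>S'. \<forall>x\<in>E' X'. phis (psi X') (psis X' x) = x"
    using assms(5) unfolding info_iso_def by blast
  have inj1: "\<forall>X\<in>S. inj_on (phis X) (E X)" by (metis i3 inj_onI)
  have inj2: "\<forall>X'\<in>S'. inj_on (psis X') (E' X')" by (metis i4 inj_onI)
  interpret P1: pb S le one E Emap S' le' one' E' Emap' phi phis Q Q'
    using IS IS' fin fin' mor inj1 PF AD PF' QQ by unfold_locales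
  have psiS: "\<forall>X'\<in>S'. psi X' \<in> S" using MOR(1)[OF mor2] by blast
  have psiim: "\<forall>X'\<in>S'. psis X' ` E' X' = E (psi X')" using MOR(4)[OF mor2] by blast
  have phiS: "\<forall>X\<in>S. phi X \<in> S'" using MOR(1)[OF mor] by blast
  have phiim: "\<forall>X\<in>S. phis X ` E X = E' (phi X)" using MOR(4)[OF mor] by blast
  have lawQ: "\<forall>X\<in>S. Q X \<subseteq> law_simplex E X" using PFD(1)[OF PF] by blast
  have lawQ': "\<forall>X'\<in>S'. Q' X' \<subseteq> law_simplex E' X'" using PFD(1)[OF PF'] by blast
  have rt1: "\<forall>X'\<in>S'. \<forall>P'\<in>Q' X'. mpush E phis (psi X') (mpush E' psis X' P') = P'"
  proof (intro ballI)
    fix X' P' assume X': "X' \<in> S'" and P': "P' \<in> Q' X'"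
    have P0: "\<forall>x. x \<notin> E' X' \<longrightarrow> P' x = 0" using lawQ' X' P' unfolding law_simplex_def by blast
    show "mpush E phis (psi X') (mpush E' psis X' P') = P'"
      unfolding mpush_def
      apply (rule mpush_inv[where A="E' X'" and B="E (psi X')"])
      using X' P' fin' psiim i4 psiS phiim i2 P0 by auto
  qed
  have rt2: "\<forall>X\<in>S. \<forall>P\<in>Q X. mpush E' psis (phi X) (mpush E phis X P) = P"
  proof (intro ballI)
    fix X P assume X: "X \<in> S" and P: "P \<in> Q X"
    have P0: "\<forall>x. x \<notin> E X \<longrightarrow> P x = 0" using lawQ X P unfolding law_simplex_def by blast
    show "mpush E' psis (phi X) (mpush E phis X P) = P"
      unfolding mpush_def
      apply (rule mpush_inv[where A="E X" and B="E' (phi X)"])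
      using X P fin phiim i3 phiS psiim i1 P0 by auto
  qed
  have QQ2: "\<forall>X'\<in>S'. Q (psi X') = mpush E' psis X' ` Q' X'"
  proof
    fix X' assume X': "X' \<in> S'"
    have X: "psi X' \<in> S" using psiS X' by blast
    have "Q' X' = mpush E phis (psi X') ` Q (psi X')" using QQ X i2 X' by metis
    then have "mpush E' psis X' ` Q' X' = (\<lambda>P. mpush E' psis X' (mpush E phis (psi X') P)) ` Q (psi X')"
      by (simp add: image_image)
    also have "\<dots> = Q (psi X')" using rt2 X i2 X' by (metis (no_types, lifting) image_cong image_ident)
    finally show "Q (psi X') = mpush E' psis X' ` Q' X'" by simp
  qed
  interpret P2: pb S' le' one' E' Emap' S le one E Emap psi psis Q' Q
    using IS IS' fin fin' mor2 inj2 PF' AD' PF QQ2 by unfold_locales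
  have RT1: "\<And>m f. is_cochain S' le' E' Emap' Q' m f \<Longrightarrow>
      pullback S' le' E' Q' psi psis m (pullback S le E Q phi phis m f) = f"
    apply (rule roundtrip)
    using psiS i2 P2.coarser_map P2.mpush_in rt1 by auto
  have RT2: "\<And>m g. is_cochain S le E Emap Q m g \<Longrightarrow>
      pullback S le E Q phi phis m (pullback S' le' E' Q' psi psis m g) = g"
    apply (rule roundtrip)
    using phiS i1 P1.coarser_map P1.mpush_in rt2 by auto
  show "induces_iso_in_degree S le E Emap Q S' le' E' Emap' Q' phi phis \<alpha> n"
    unfolding induces_iso_in_degree_def
  proof (intro conjI allI impI)
    fix f assume "is_cochain S' le' E' Emap' Q' n f"
    then show "is_cochain S le E Emap Q n (pullback S le E Q phi phis n f)" by (rule P1.pullback_cochain)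
  next
    fix f
    show "pullback S le E Q phi phis (Suc n) (cobdry S' le' E' Emap' Q' \<alpha> n f) =
        cobdry S le E Emap Q \<alpha> n (pullback S le E Q phi phis n f)" by (rule P1.pullback_cobdry)
  next
    fix f assume h: "is_cocycle S' le' E' Emap' Q' \<alpha> n f \<and>
          is_coboundary S le E Emap Q \<alpha> n (pullback S le E Q phi phis n f)"
    have fc: "is_cochain S' le' E' Emap' Q' n f" using h unfolding is_cocycle_def by blast
    have feq: "f = pullback S' le' E' Q' psi psis n (pullback S le E Q phi phis n f)" using RT1[OF fc] by simp
    show "is_coboundary S' le' E' Emap' Q' \<alpha> n f"
    proof (cases "n = 0")
      case True
      then have "pullback S le E Q phi phis n f = (\<lambda>_ _ _. 0)" using h unfolding is_coboundary_def by simp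
      then have "f = pullback S' le' E' Q' psi psis n (\<lambda>_ _ _. 0)" using feq by (simp only:)
      then have "f = (\<lambda>_ _ _. 0)" unfolding pullback_zero .
      then show ?thesis using True unfolding is_coboundary_def by simp
    next
      case False
      then obtain g where g: "is_cochain S le E Emap Q (n - 1) g"
        and ge: "pullback S le E Q phi phis n f = cobdry S le E Emap Q \<alpha> (n - 1) g"
        using h unfolding is_coboundary_def by auto
      have sn: "Suc (n - 1) = n" using False by simp
      have "f = pullback S' le' E' Q' psi psis n (cobdry S le E Emap Q \<alpha> (n - 1) g)"
        using feq unfolding ge .
      then have "f = pullback S' le' E' Q' psi psis (Suc (n - 1)) (cobdry S le E Emap Q \<alpha> (n - 1) g)"
        unfolding sn .
      also have "\<dots> = cobdry S' le' E' Emap' Q' \<alpha> (n - 1) (pullback S' le' E' Q' psi psis (n - 1) g)"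
        by (rule P2.pullback_cobdry)
      finally have "\<exists>g'. is_cochain S' le' E' Emap' Q' (n - 1) g' \<and> f = cobdry S' le' E' Emap' Q' \<alpha> (n - 1) g'"
        using P2.pullback_cochain[OF g] by blast
      then show ?thesis using False unfolding is_coboundary_def by simp
    qed
  next
    fix g assume g: "is_cocycle S le E Emap Q \<alpha> n g"
    have gc: "is_cochain S le E Emap Q n g" using g unfolding is_cocycle_def by blast
    have g0: "cobdry S le E Emap Q \<alpha> n g = (\<lambda>_ _ _. 0)" using g unfolding is_cocycle_def by blast
    let ?f = "pullback S' le' E' Q' psi psis n g"
    have c1: "is_cochain S' le' E' Emap' Q' n ?f" by (rule P2.pullback_cochain[OF gc])
    have c2: "cobdry S' le' E' Emap' Q' \<alpha> n ?f = (\<lambda>_ _ _. 0)"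
    proof -
      have "pullback S' le' E' Q' psi psis (Suc n) (cobdry S le E Emap Q \<alpha> n g) = cobdry S' le' E' Emap' Q' \<alpha> n ?f"
        by (rule P2.pullback_cobdry)
      then show ?thesis unfolding g0 pullback_zero by simp
    qed
    have d: "(\<lambda>Y xs P. g Y xs P - pullback S le E Q phi phis n ?f Y xs P) = (\<lambda>_ _ _. 0)"
      using RT2[OF gc] by simp
    have cb: "is_coboundary S le E Emap Q \<alpha> n (\<lambda>_ _ _. 0)"
    proof -
      have "is_cochain S le E Emap Q (n - 1) (\<lambda>_ _ _. 0) \<and> (\<lambda>_ _ _. 0) = cobdry S le E Emap Q \<alpha> (n - 1) (\<lambda>_ _ _. 0)"
        using zero_cochain[of S le E Emap Q "n - 1"] cobdry_zero[of S le E Emap Q \<alpha> "n - 1"] by simp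
      then show ?thesis unfolding is_coboundary_def by auto
    qed
    show "\<exists>f. is_cocycle S' le' E' Emap' Q' \<alpha> n f \<and>
             is_coboundary S le E Emap Q \<alpha> n (\<lambda>Y xs P. g Y xs P - pullback S le E Q phi phis n f Y xs P)"
      apply (rule exI[of _ ?f])
      using c1 c2 d cb unfolding is_cocycle_def by simp
  qed
qed


end
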